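(* Let $\mathcal{T}$ be a simplicial tree, $G \leq \mathrm{Aut}(\mathcal{T})$, and let $g_1, g_2, g_3 \in G$ be supported in pairwise disjoint half-trees. Then for every $g \in G$, at least one of the following holds: (1) $[g_1^g, g_1] = 1$ or $[g_2^g, g_2] = 1$ or $[g_3^g, g_3] = 1$; (2) $[g_1^g, g_2] = [g_1^g, g_3] = [g_2^g, g_1] = [g_2^g, g_3] = [g_3^g, g_1] = [g_3^g, g_2] = 1$. In particular, for every $g \in G$ there exist $i, j \in \{1,2,3\}$ such that $[g_i^g, g_j] = 1$.
   Context: If $e$ is an edge of $\mathcal{T}$ and $v$ a vertex of $e$, the half-tree determined by $(e,v)$ is the subtree spanned by the vertices whose projection onto $e$ equals $v$. An element is supported in a half-tree $A$ if it fixes pointwise the complement of $A$. Notation: $h^g = g h g^{-1}$ and $[g,h] = g h g^{-1} h^{-1}$. *)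

theory Defs
  imports Main
begin

definition walk :: "('v \<Rightarrow> 'v \<Rightarrow> bool) \<Rightarrow> 'v list \<Rightarrow> bool" where
  "walk E xs \<longleftrightarrow> xs \<noteq> [] \<and> (\<forall>i. Suc i < length xs \<longrightarrow> E (xs ! i) (xs ! Suc i))"

definition is_cycle :: "('v \<Rightarrow> 'v \<Rightarrow> bool) \<Rightarrow> 'v list \<Rightarrow> bool" where
  "is_cycle E xs \<longleftrightarrow> length xs \<ge> 3 \<and> distinct xs \<and> walk E xs \<and> E (last xs) (hd xs)"

definition simplicial_tree :: "('v \<Rightarrow> 'v \<Rightarrow> bool) \<Rightarrow> bool" where
  "simplicial_tree E \<longleftrightarrow>
     (\<forall>x y. E x y \<longrightarrow> E y x) \<and> (\<forall>x. \<not> E x x) \<and>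
     (\<forall>u v. \<exists>xs. walk E xs \<and> hd xs = u \<and> last xs = v) \<and>
     (\<nexists>xs. is_cycle E xs)"

definition tdist :: "('v \<Rightarrow> 'v \<Rightarrow> bool) \<Rightarrow> 'v \<Rightarrow> 'v \<Rightarrow> nat" where
  "tdist E u v = (LEAST n. \<exists>xs. walk E xs \<and> hd xs = u \<and> last xs = v \<and> length xs = Suc n)"

definition tree_aut :: "('v \<Rightarrow> 'v \<Rightarrow> bool) \<Rightarrow> ('v \<Rightarrow> 'v) set" where
  "tree_aut E = {f. bij f \<and> (\<forall>x y. E x y \<longleftrightarrow> E (f x) (f y))}"

definition proj_edge :: "('v \<Rightarrow> 'v \<Rightarrow> bool) \<Rightarrow> 'v \<Rightarrow> 'v \<Rightarrow> 'v \<Rightarrow> 'v" where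
  "proj_edge E v w x = (if tdist E x v \<le> tdist E x w then v else w)"

definition half_tree :: "('v \<Rightarrow> 'v \<Rightarrow> bool) \<Rightarrow> 'v \<Rightarrow> 'v \<Rightarrow> 'v set" where
  "half_tree E v w = {x. proj_edge E v w x = v}"

definition is_half_tree :: "('v \<Rightarrow> 'v \<Rightarrow> bool) \<Rightarrow> 'v set \<Rightarrow> bool" where
  "is_half_tree E A \<longleftrightarrow> (\<exists>v w. E v w \<and> A = half_tree E v w)"

definition supported_in :: "('v \<Rightarrow> 'v) \<Rightarrow> 'v set \<Rightarrow> bool" where
  "supported_in f A \<longleftrightarrow> (\<forall>x. x \<notin> A \<longrightarrow> f x = x)"

text \<open>h^g = g h g^{-1}, [g,h] = g h g^{-1} h^{-1} (composition of maps).\<close>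
definition conjg :: "('v \<Rightarrow> 'v) \<Rightarrow> ('v \<Rightarrow> 'v) \<Rightarrow> ('v \<Rightarrow> 'v)" where
  "conjg g h = g \<circ> h \<circ> inv g"

definition commg :: "('v \<Rightarrow> 'v) \<Rightarrow> ('v \<Rightarrow> 'v) \<Rightarrow> ('v \<Rightarrow> 'v)" where
  "commg g h = g \<circ> h \<circ> inv g \<circ> inv h"

end

theory Submission
  imports Defs
begin

fun pw :: "('v \<Rightarrow> 'v \<Rightarrow> bool) \<Rightarrow> 'v list \<Rightarrow> bool" where
  "pw Q [] = False"
| "pw Q [x] = True"
| "pw Q (x # y # xs) = (Q x y \<and> pw Q (y # xs))"

lemma all_shift: "(\<forall>i. i < Suc n \<longrightarrow> P i) \<longleftrightarrow> P 0 \<and> (\<forall>i. i < n \<longrightarrow> P (Suc i))"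
proof
  assume "\<forall>i. i < Suc n \<longrightarrow> P i" then show "P 0 \<and> (\<forall>i. i < n \<longrightarrow> P (Suc i))" by simp
next
  assume h: "P 0 \<and> (\<forall>i. i < n \<longrightarrow> P (Suc i))"
  show "\<forall>i. i < Suc n \<longrightarrow> P i"
  proof (intro allI impI)
    fix i assume "i < Suc n" then show "P i" using h by (cases i) auto
  qed
qed

lemma walk_pw: "walk E xs = pw E xs"
proof (induction E xs rule: pw.induct)
  case (1 Q) then show ?case by (simp add: walk_def)
next
  case (2 Q x) then show ?case by (simp add: walk_def)
next
  case (3 Q x y xs)
  have "walk Q (x # y # xs) \<longleftrightarrow> Q x y \<and> walk Q (y # xs)"
    unfolding walk_def by (simp add: all_shift del: nth_Cons_Suc) 
  then show ?case using 3 by simp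
qed

lemma pw_ne: "pw Q xs \<Longrightarrow> xs \<noteq> []" by (cases xs) auto

lemma pw_split: "pw Q (xs @ y # ys) \<longleftrightarrow> pw Q (xs @ [y]) \<and> pw Q (y # ys)"
proof (induction xs)
  case Nil then show ?case by simp
next
  case (Cons x xs)
  show ?case
  proof (cases xs)
    case Nil then show ?thesis by simp
  next
    case (Cons z zs)
    have "pw Q ((x # xs) @ y # ys) = (Q x z \<and> pw Q (xs @ y # ys))" using Cons by simp
    moreover have "pw Q ((x # xs) @ [y]) = (Q x z \<and> pw Q (xs @ [y]))" using Cons by simp
    ultimately show ?thesis using Cons.IH by blast
  qed
qed

lemma pw_rev: "(\<And>x y. Q x y \<Longrightarrow> Q y x) \<Longrightarrow> pw Q xs \<Longrightarrow> pw Q (rev xs)"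
proof (induction Q xs rule: pw.induct)
  case (3 Q x y xs)
  have a: "pw Q (rev xs @ [y])" using 3 by simp
  have b: "pw Q [y, x]" using 3 by simp
  have "pw Q (rev xs @ y # [x])" using pw_split[of Q "rev xs" y "[x]"] a b by blast
  then show ?case by simp
qed auto

lemma pw_mono: "pw Q xs \<Longrightarrow> (\<And>x y. Q x y \<Longrightarrow> Q' x y) \<Longrightarrow> pw Q' xs"
  by (induction Q xs rule: pw.induct) auto

lemma pw_map: "pw Q xs \<Longrightarrow> (\<And>x y. Q x y \<Longrightarrow> Q' (g x) (g y)) \<Longrightarrow> pw Q' (map g xs)"
  by (induction Q xs rule: pw.induct) auto

lemma pw_distinct: "pw Q xs \<Longrightarrow> \<exists>ys. pw Q ys \<and> distinct ys \<and> hd ys = hd xs \<and> last ys = last xs"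
proof (induction "length xs" arbitrary: xs rule: less_induct)
  case less
  show ?case
  proof (cases "distinct xs")
    case True then show ?thesis using less by blast
  next
    case False
    then obtain as y bs cs where xs: "xs = as @ [y] @ bs @ [y] @ cs"
      using not_distinct_decomp by blast
    have p: "pw Q (as @ y # (bs @ y # cs))" using less xs by simp
    have s: "pw Q (as @ [y]) \<and> pw Q ((y # bs) @ y # cs)" using pw_split[THEN iffD1, OF p] by simp
    then have "pw Q (y # cs)" using pw_split[of Q "y#bs" y cs] by blast
    then have "pw Q (as @ y # cs)" using s pw_split[of Q as y cs] by blast
    moreover have "length (as @ y # cs) < length xs" using xs by simp
    ultimately obtain ys where "pw Q ys \<and> distinct ys \<and> hd ys = hd (as @ y # cs) \<and> last ys = last (as @ y # cs)"
      using less by blast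
    moreover have "hd (as @ y # cs) = hd xs" using xs by (cases as) auto
    moreover have "last (as @ y # cs) = last xs" using xs by (cases cs) auto
    ultimately show ?thesis by metis
  qed
qed

definition reach :: "('v \<Rightarrow> 'v \<Rightarrow> bool) \<Rightarrow> 'v \<Rightarrow> 'v \<Rightarrow> bool" where
  "reach Q x y \<longleftrightarrow> (\<exists>xs. pw Q xs \<and> hd xs = x \<and> last xs = y)"

definition qe :: "('v \<Rightarrow> 'v \<Rightarrow> bool) \<Rightarrow> 'v \<Rightarrow> 'v \<Rightarrow> 'v \<Rightarrow> 'v \<Rightarrow> bool" where
  "qe E v w = (\<lambda>x y. E x y \<and> \<not> (x = v \<and> y = w) \<and> \<not> (x = w \<and> y = v))"

lemma qe_swap: "qe E w v = qe E v w" unfolding qe_def by (auto simp: fun_eq_iff)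

lemma reach_refl: "reach Q x x" unfolding reach_def by (rule exI[of _ "[x]"]) simp

lemma reach_sym: "(\<And>x y. Q x y \<Longrightarrow> Q y x) \<Longrightarrow> reach Q x y \<Longrightarrow> reach Q y x"
proof -
  assume s: "\<And>x y. Q x y \<Longrightarrow> Q y x" and "reach Q x y"
  then obtain xs where a: "pw Q xs" "hd xs = x" "last xs = y" unfolding reach_def by blast
  have "pw Q (rev xs)" using pw_rev[OF s a(1)] by blast
  moreover have "hd (rev xs) = y" "last (rev xs) = x" using a by (simp_all add: hd_rev last_rev)
  ultimately show ?thesis unfolding reach_def by blast
qed

lemma reach_trans: "reach Q x y \<Longrightarrow> reach Q y z \<Longrightarrow> reach Q x z"
proof -
  assume "reach Q x y" "reach Q y z"
  then obtain xs ys where a: "pw Q xs" "hd xs = x" "last xs = y" "pw Q ys" "hd ys = y" "last ys = z"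
    unfolding reach_def by blast
  obtain ys' where ys: "ys = y # ys'" using a pw_ne by (cases ys) auto
  have xs: "xs = butlast xs @ [y]" using a pw_ne[OF a(1)] append_butlast_last_id by metis
  have "pw Q (butlast xs @ [y])" using a xs by simp
  then have "pw Q (butlast xs @ y # ys')" using a ys pw_split[of Q "butlast xs" y ys'] by blast
  moreover have "hd (butlast xs @ y # ys') = hd (butlast xs @ [y])" by (cases "butlast xs") auto
  then have "hd (butlast xs @ y # ys') = x" using a xs by metis
  moreover have "last (butlast xs @ y # ys') = z" using a ys by simp
  ultimately show ?thesis unfolding reach_def by blast
qed

lemma qe_sym: "(\<And>x y. E x y \<Longrightarrow> E y x) \<Longrightarrow> qe E v w x y \<Longrightarrow> qe E v w y x"
  unfolding qe_def by auto

lemma tree_props: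
  assumes "simplicial_tree E"
  shows "\<And>x y. E x y \<Longrightarrow> E y x" "\<And>x. \<not> E x x" "\<And>u v. reach E u v"
    "\<And>xs. \<not> is_cycle E xs"
  using assms unfolding simplicial_tree_def reach_def walk_pw by auto

lemma bridge:
  assumes T: "simplicial_tree E" and e: "E v w"
  shows "\<not> reach (qe E v w) v w"
proof
  assume "reach (qe E v w) v w"
  then obtain xs where "pw (qe E v w) xs" "hd xs = v" "last xs = w" unfolding reach_def by blast
  then obtain ys where ys: "pw (qe E v w) ys" "distinct ys" "hd ys = v" "last ys = w"
    using pw_distinct by metis
  have vw: "v \<noteq> w" using e tree_props(2)[OF T] by auto
  obtain y1 r where y1: "ys = v # r" using ys pw_ne by (cases ys) auto
  have "r \<noteq> []" using y1 ys vw by auto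
  then obtain y2 r' where r: "r = y2 # r'" by (cases r) auto
  have "r' \<noteq> []"
  proof
    assume "r' = []"
    then have "ys = [v, w]" using y1 r ys by simp
    then show False using ys(1) unfolding qe_def by simp
  qed
  then have len: "length ys \<ge> 3" using y1 r by (cases r') auto
  have "walk E ys" unfolding walk_pw using ys(1) by (rule pw_mono) (simp add: qe_def)
  moreover have "E (last ys) (hd ys)" using ys e tree_props(1)[OF T] by simp
  ultimately have "is_cycle E ys" using len ys unfolding is_cycle_def by simp
  then show False using tree_props(4)[OF T] by blast
qed

lemma first_use:
  "pw E xs \<Longrightarrow> pw (qe E v w) xs \<or>
     (\<exists>ys. pw (qe E v w) ys \<and> hd ys = hd xs \<and> (last ys = v \<or> last ys = w) \<and> length ys < length xs)"
proof (induction E xs rule: pw.induct)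
  case (3 Q x y xs)
  show ?case
  proof (cases "qe Q v w x y")
    case False
    then have "x = v \<or> x = w" using 3 unfolding qe_def by auto
    then show ?thesis by (intro disjI2 exI[of _ "[x]"]) auto
  next
    case True
    from 3 have "pw (qe Q v w) (y # xs) \<or>
     (\<exists>ys. pw (qe Q v w) ys \<and> hd ys = y \<and> (last ys = v \<or> last ys = w) \<and> length ys < length (y#xs))"
      by simp
    then show ?thesis
    proof
      assume "pw (qe Q v w) (y # xs)" then show ?thesis using True by simp
    next
      assume "\<exists>ys. pw (qe Q v w) ys \<and> hd ys = y \<and> (last ys = v \<or> last ys = w) \<and> length ys < length (y#xs)"
      then obtain ys where ys: "pw (qe Q v w) ys" "hd ys = y" "last ys = v \<or> last ys = w" "length ys < length (y#xs)" by blast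
      obtain ys' where ys': "ys = y # ys'" using ys pw_ne by (cases ys) auto
      show ?thesis
        by (rule disjI2, rule exI[of _ "x # ys"]) (use ys ys' True in auto)
    qed
  qed
qed auto

lemma pw_contains:
  "pw Q xs \<Longrightarrow> \<not> pw (\<lambda>x y. Q x y \<and> \<not> (x = a \<and> y = b) \<and> \<not> (x = b \<and> y = a)) xs \<Longrightarrow> a \<in> set xs"
  by (induction Q xs rule: pw.induct) auto

lemma pw_reach_last: "pw Q xs \<Longrightarrow> y \<in> set xs \<Longrightarrow> reach Q y (last xs)"
proof (induction Q xs rule: pw.induct)
  case (2 Q x) then show ?case by (simp add: reach_refl)
next
  case (3 Q x z xs)
  show ?case
  proof (cases "y = x")
    case True then show ?thesis using 3 unfolding reach_def by (intro exI[of _ "x # z # xs"]) simp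
  next
    case False then show ?thesis using 3 by simp
  qed
qed auto


definition side :: "('v \<Rightarrow> 'v \<Rightarrow> bool) \<Rightarrow> 'v \<Rightarrow> 'v \<Rightarrow> 'v set" where
  "side E v w = {x. reach (qe E v w) x v}"

lemma side_cover:
  assumes T: "simplicial_tree E"
  shows "reach (qe E v w) x v \<or> reach (qe E v w) x w"
proof -
  obtain xs where xs: "pw E xs" "hd xs = x" "last xs = v"
    using tree_props(3)[OF T] unfolding reach_def by blast
  from first_use[OF xs(1), of v w] show ?thesis
  proof
    assume "pw (qe E v w) xs" then show ?thesis using xs unfolding reach_def by blast
  next
    assume "\<exists>ys. pw (qe E v w) ys \<and> hd ys = hd xs \<and> (last ys = v \<or> last ys = w) \<and> length ys < length xs"
    then show ?thesis using xs unfolding reach_def by metis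
  qed
qed

lemma side_disj:
  assumes T: "simplicial_tree E" and e: "E v w"
  shows "\<not> (reach (qe E v w) x v \<and> reach (qe E v w) x w)"
proof
  assume h: "reach (qe E v w) x v \<and> reach (qe E v w) x w"
  have s: "\<And>x y. qe E v w x y \<Longrightarrow> qe E v w y x" using tree_props(1)[OF T] unfolding qe_def by blast
  have hv: "reach (qe E v w) x v" and hw: "reach (qe E v w) x w" using h by auto
  have "reach (qe E v w) v x" by (rule reach_sym[of "qe E v w" x v, OF s hv])
  then have "reach (qe E v w) v w" by (rule reach_trans[OF _ hw])
  then show False using bridge[OF T e] by blast
qed

lemma tdist_le: "pw E xs \<Longrightarrow> tdist E (hd xs) (last xs) \<le> length xs - 1"
proof -
  assume p: "pw E xs"
  have "xs \<noteq> []" using pw_ne[OF p] .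
  then have "length xs = Suc (length xs - 1)" by simp
  then have "\<exists>ys. walk E ys \<and> hd ys = hd xs \<and> last ys = last xs \<and> length ys = Suc (length xs - 1)"
    using p walk_pw by metis
  then show ?thesis unfolding tdist_def by (rule Least_le)
qed

lemma tdist_ex:
  assumes T: "simplicial_tree E"
  shows "\<exists>xs. pw E xs \<and> hd xs = x \<and> last xs = y \<and> length xs = Suc (tdist E x y)"
proof -
  obtain xs where xs: "pw E xs" "hd xs = x" "last xs = y"
    using tree_props(3)[OF T] unfolding reach_def by blast
  have "length xs = Suc (length xs - 1)" using pw_ne[OF xs(1)] by simp
  then have "\<exists>n. \<exists>xs. walk E xs \<and> hd xs = x \<and> last xs = y \<and> length xs = Suc n"
    using xs walk_pw by metis
  from LeastI_ex[OF this] show ?thesis unfolding tdist_def walk_pw .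
qed

lemma side_closer:
  assumes T: "simplicial_tree E" and e: "E v w" and r: "reach (qe E v w) x v"
  shows "tdist E x v < tdist E x w"
proof -
  obtain ws where ws: "pw E ws" "hd ws = x" "last ws = w" "length ws = Suc (tdist E x w)"
    using tdist_ex[OF T] by blast
  from first_use[OF ws(1), of v w] show ?thesis
  proof
    assume "pw (qe E v w) ws"
    then have "reach (qe E v w) x w" using ws unfolding reach_def by blast
    then show ?thesis using side_disj[OF T e] r by blast
  next
    assume "\<exists>ys. pw (qe E v w) ys \<and> hd ys = hd ws \<and> (last ys = v \<or> last ys = w) \<and> length ys < length ws"
    then obtain ys where ys: "pw (qe E v w) ys" "hd ys = x" "last ys = v \<or> last ys = w" "length ys < length ws"
      using ws by metis
    show ?thesis
    proof (cases "last ys = w")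
      case True
      then have "reach (qe E v w) x w" using ys unfolding reach_def by blast
      then show ?thesis using side_disj[OF T e] r by blast
    next
      case False
      then have lv: "last ys = v" using ys by blast
      have "pw E ys" using ys(1) by (rule pw_mono) (simp add: qe_def)
      then have "tdist E x v \<le> length ys - 1" using tdist_le ys(2) lv by metis
      then show ?thesis using ys(4) ws(4) pw_ne[OF ys(1)] by (cases ys) auto
    qed
  qed
qed

lemma half_tree_side:
  assumes T: "simplicial_tree E" and e: "E v w"
  shows "half_tree E v w = side E v w"
proof -
  have vw: "v \<noteq> w" using e tree_props(2)[OF T] by auto
  have e': "E w v" using e tree_props(1)[OF T] by blast
  show ?thesis
  proof (intro set_eqI iffI)
    fix x assume "x \<in> half_tree E v w"
    then have h: "tdist E x v \<le> tdist E x w" unfolding half_tree_def proj_edge_def using vw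
      by (auto split: if_splits)
    show "x \<in> side E v w"
    proof (rule ccontr)
      assume "x \<notin> side E v w"
      then have "reach (qe E v w) x w" using side_cover[OF T, of v w x] unfolding side_def by blast
      then have "reach (qe E w v) x w" by (simp add: qe_swap)
      then have "tdist E x w < tdist E x v" using side_closer[OF T e'] by blast
      then show False using h by simp
    qed
  next
    fix x assume "x \<in> side E v w"
    then have "tdist E x v < tdist E x w" using side_closer[OF T e] unfolding side_def by blast
    then show "x \<in> half_tree E v w" unfolding half_tree_def proj_edge_def by simp
  qed
qed

lemma S_lemma:
  assumes T: "simplicial_tree E" and e: "E v w"
    and r: "reach (qe E v w) a v" and x: "reach (qe E v w) x w"
  shows "reach (qe E a b) x w"
proof -
  obtain xs where xs: "pw (qe E v w) xs" "hd xs = x" "last xs = w" using x unfolding reach_def by blast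
  show ?thesis
  proof (cases "pw (\<lambda>x y. qe E v w x y \<and> \<not> (x = a \<and> y = b) \<and> \<not> (x = b \<and> y = a)) xs")
    case True
    then have "pw (qe E a b) xs" by (rule pw_mono) (simp add: qe_def)
    then show ?thesis using xs unfolding reach_def by blast
  next
    case False
    then have "a \<in> set xs" using pw_contains[OF xs(1)] by blast
    then have "reach (qe E v w) a w" using pw_reach_last[OF xs(1)] xs(3) by metis
    then show ?thesis using side_disj[OF T e] r by blast
  qed
qed

lemma trich_side:
  assumes T: "simplicial_tree E" and e: "E v w" and f: "E a b"
  shows "side E v w \<inter> side E a b = {} \<or> side E v w \<subseteq> side E a b \<or> side E a b \<subseteq> side E v w
     \<or> side E v w \<union> side E a b = UNIV"
proof -
  have e': "E w v" using e tree_props(1)[OF T] by blast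
  show ?thesis
  proof (cases "reach (qe E v w) a v")
    case True
    have S: "\<And>x. reach (qe E v w) x w \<Longrightarrow> reach (qe E a b) x w" using S_lemma[OF T e True] by blast
    consider "reach (qe E a b) w a" | "reach (qe E a b) w b" using side_cover[OF T] by blast
    then show ?thesis
    proof cases
      case 1
      have "x \<in> side E v w \<union> side E a b" for x
        proof (cases "x \<in> side E v w")
          case False
          then have "reach (qe E v w) x w" using side_cover[OF T, of v w x] unfolding side_def by blast
          then have "reach (qe E a b) x a" using reach_trans[OF S 1] by blast
          then show ?thesis unfolding side_def by blast
        qed simp
      then show ?thesis by blast
    next
      case 2
      have "side E a b \<subseteq> side E v w"
      proof
        fix x assume xa: "x \<in> side E a b"
        show "x \<in> side E v w"
        proof (rule ccontr)
          assume "x \<notin> side E v w"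
          then have "reach (qe E v w) x w" using side_cover[OF T, of v w x] unfolding side_def by blast
          then have "reach (qe E a b) x b" using reach_trans[OF S 2] by blast
          then show False using xa side_disj[OF T f] unfolding side_def by blast
        qed
      qed
      then show ?thesis by blast
    qed
  next
    case False
    then have "reach (qe E v w) a w" using side_cover[OF T] by blast
    then have aw: "reach (qe E w v) a w" by (simp add: qe_swap)
    have S: "\<And>x. reach (qe E v w) x v \<Longrightarrow> reach (qe E a b) x v"
      using S_lemma[OF T e' aw, where b=b] unfolding qe_swap[of E w v] by blast
    consider "reach (qe E a b) v a" | "reach (qe E a b) v b" using side_cover[OF T] by blast
    then show ?thesis
    proof cases
      case 1
      have "side E v w \<subseteq> side E a b"
        unfolding side_def using reach_trans[OF S 1] by blast
      then show ?thesis by blast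
    next
      case 2
      have "side E v w \<inter> side E a b = {}"
      proof (intro set_eqI iffI)
        fix x assume "x \<in> side E v w \<inter> side E a b"
        then have "reach (qe E v w) x v" "reach (qe E a b) x a"
          unfolding side_def by blast+
        then have "reach (qe E a b) x b" "reach (qe E a b) x a"
          using reach_trans[OF S 2] by blast+
        then show "x \<in> {}" using side_disj[OF T f] by blast
      qed simp
      then show ?thesis by blast
    qed
  qed
qed

lemma trich_half:
  assumes T: "simplicial_tree E" and X: "is_half_tree E X" and Y: "is_half_tree E Y"
  shows "X \<inter> Y = {} \<or> X \<subseteq> Y \<or> Y \<subseteq> X \<or> X \<union> Y = UNIV"
proof -
  obtain v w where 1: "E v w" "X = half_tree E v w" using X unfolding is_half_tree_def by blast
  obtain a b where 2: "E a b" "Y = half_tree E a b" using Y unfolding is_half_tree_def by blast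
  show ?thesis using trich_side[OF T 1(1) 2(1)] half_tree_side[OF T 1(1)] half_tree_side[OF T 2(1)] 1(2) 2(2)
    by simp
qed

lemma reach_map:
  assumes g: "g \<in> tree_aut E" and r: "reach (qe E v w) x y"
  shows "reach (qe E (g v) (g w)) (g x) (g y)"
proof -
  have ig: "inj g" using g unfolding tree_aut_def by (auto simp: bij_def)
  have Eg: "\<And>x y. E x y \<longleftrightarrow> E (g x) (g y)" using g unfolding tree_aut_def by blast
  obtain xs where xs: "pw (qe E v w) xs" "hd xs = x" "last xs = y" using r unfolding reach_def by blast
  have "pw (qe E (g v) (g w)) (map g xs)"
    using xs(1) by (rule pw_map) (use Eg ig in \<open>auto simp: qe_def inj_eq\<close>)
  moreover have "hd (map g xs) = g x" "last (map g xs) = g y"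
    using xs pw_ne[OF xs(1)] by (simp_all add: hd_map last_map)
  ultimately show ?thesis unfolding reach_def by blast
qed

lemma side_image:
  assumes T: "simplicial_tree E" and g: "g \<in> tree_aut E" and e: "E v w"
  shows "g ` side E v w = side E (g v) (g w)"
proof
  show "g ` side E v w \<subseteq> side E (g v) (g w)"
    unfolding side_def using reach_map[OF g] by blast
next
  have sg: "surj g" using g unfolding tree_aut_def by (auto simp: bij_def)
  have e': "E (g v) (g w)" using g e unfolding tree_aut_def by blast
  show "side E (g v) (g w) \<subseteq> g ` side E v w"
  proof
    fix y assume y: "y \<in> side E (g v) (g w)"
    obtain x where x: "y = g x" using sg by (metis surjD)
    show "y \<in> g ` side E v w"
    proof (cases "x \<in> side E v w")
      case True then show ?thesis using x by blast
    next
      case False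
      then have "reach (qe E v w) x w" using side_cover[OF T, of v w x] unfolding side_def by blast
      then have "reach (qe E (g v) (g w)) y (g w)" using reach_map[OF g] x by blast
      then show ?thesis using y side_disj[OF T e'] unfolding side_def by blast
    qed
  qed
qed

lemma half_image:
  assumes T: "simplicial_tree E" and g: "g \<in> tree_aut E" and X: "is_half_tree E X"
  shows "is_half_tree E (g ` X)"
proof -
  obtain v w where vw: "E v w" "X = half_tree E v w" using X unfolding is_half_tree_def by blast
  have e': "E (g v) (g w)" using g vw unfolding tree_aut_def by blast
  have "g ` X = half_tree E (g v) (g w)"
    using vw side_image[OF T g vw(1)] half_tree_side[OF T vw(1)] half_tree_side[OF T e'] by simp
  then show ?thesis using e' unfolding is_half_tree_def by blast
qed

lemma supp_maps:
  assumes b: "bij f" and s: "supported_in f X" and x: "x \<in> X"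
  shows "f x \<in> X"
proof (rule ccontr)
  assume "f x \<notin> X"
  then have "f (f x) = f x" using s unfolding supported_in_def by blast
  then have "f x = x" using b by (simp add: bij_def inj_eq)
  then show False using x \<open>f x \<notin> X\<close> by simp
qed

lemma commute:
  assumes bf: "bij f" and bh: "bij h" and sf: "supported_in f X" and sh: "supported_in h Y"
    and d: "X \<inter> Y = {}"
  shows "commg f h = id"
proof -
  have c: "f \<circ> h = h \<circ> f"
  proof
    fix x
    show "(f \<circ> h) x = (h \<circ> f) x"
    proof (cases "x \<in> X")
      case True
      then have "h x = x" "h (f x) = f x" using sh d supp_maps[OF bf sf True] unfolding supported_in_def by blast+
      then show ?thesis by simp
    next
      case False
      note nx = False
      show ?thesis
      proof (cases "x \<in> Y")
        case True
        then have "f x = x" "f (h x) = h x" using sf d supp_maps[OF bh sh True] unfolding supported_in_def by blast+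
        then show ?thesis by simp
      next
        case False
        then show ?thesis using nx sf sh unfolding supported_in_def by simp
      qed
    qed
  qed
  have "commg f h = h \<circ> (f \<circ> inv f) \<circ> inv h" unfolding commg_def using c by (simp add: comp_assoc)
  also have "\<dots> = id"
  proof -
    have "f \<circ> inv f = id" "h \<circ> inv h = id" using bf bh bij_is_surj surj_iff by blast+
    then show ?thesis by simp
  qed
  finally show ?thesis .
qed

lemma conj_supp:
  assumes b: "bij g" and s: "supported_in h A"
  shows "supported_in (conjg g h) (g ` A)"
  unfolding supported_in_def conjg_def
proof (intro allI impI)
  fix x assume "x \<notin> g ` A"
  then have "inv g x \<notin> A" using b by (metis bij_inv_eq_iff image_eqI)
  then have "h (inv g x) = inv g x" using s unfolding supported_in_def by blast
  then show "(g \<circ> h \<circ> inv g) x = x" using b by (simp add: bij_inv_eq_iff)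
qed

lemma conj_bij: "bij g \<Longrightarrow> bij h \<Longrightarrow> bij (conjg g h)"
  unfolding conjg_def by (intro bij_comp bij_imp_bij_inv) auto

lemma setM:
  assumes tri: "Y \<inter> Aj = {} \<or> Y \<subseteq> Aj \<or> Aj \<subseteq> Y \<or> Y \<union> Aj = UNIV"
    and "Y \<inter> Ai \<noteq> {}" "Ai \<inter> Aj = {}" "Y \<inter> Yj = {}" "Yj \<inter> Aj \<noteq> {}"
    "Ak \<inter> Aj = {}" "Yk \<inter> Ak \<noteq> {}" "Y \<inter> Yk = {}"
  shows "Y \<inter> Aj = {}"
  using tri
proof (elim disjE)
  assume "Y \<subseteq> Aj" then show ?thesis using assms by blast
next
  assume "Aj \<subseteq> Y" then show ?thesis using assms by blast
next
  assume "Y \<union> Aj = UNIV" then have "Ak \<subseteq> Y" using assms by blast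
  then show ?thesis using assms by blast
qed

lemma pick:
  "commg (conjg g ([g1,g2,g3] ! (i-1))) ([g1,g2,g3] ! (j-1)) = id \<Longrightarrow> i \<in> {1::nat,2,3} \<Longrightarrow> j \<in> {1::nat,2,3}
   \<Longrightarrow> \<exists>i\<in>{1::nat,2,3}. \<exists>j\<in>{1::nat,2,3}. commg (conjg g ([g1,g2,g3] ! (i-1))) ([g1,g2,g3] ! (j-1)) = id"
  by blast

theorem lemma3p6:
  fixes E :: "'v \<Rightarrow> 'v \<Rightarrow> bool" and G :: "('v \<Rightarrow> 'v) set"
    and g1 g2 g3 :: "'v \<Rightarrow> 'v" and A1 A2 A3 :: "'v set"
  assumes tree: "simplicial_tree E"
    and G_sub: "G \<subseteq> tree_aut E" and G_id: "id \<in> G"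
    and G_mult: "\<And>f h. f \<in> G \<Longrightarrow> h \<in> G \<Longrightarrow> f \<circ> h \<in> G"
    and G_inv: "\<And>f. f \<in> G \<Longrightarrow> inv f \<in> G"
    and g_in: "g1 \<in> G" "g2 \<in> G" "g3 \<in> G"
    and A_half: "is_half_tree E A1" "is_half_tree E A2" "is_half_tree E A3"
    and A_disj: "A1 \<inter> A2 = {}" "A1 \<inter> A3 = {}" "A2 \<inter> A3 = {}"
    and supp: "supported_in g1 A1" "supported_in g2 A2" "supported_in g3 A3"
  shows "\<forall>g\<in>G.
     ((commg (conjg g g1) g1 = id \<or> commg (conjg g g2) g2 = id \<or> commg (conjg g g3) g3 = id) \<or>
      (commg (conjg g g1) g2 = id \<and> commg (conjg g g1) g3 = id \<and>
       commg (conjg g g2) g1 = id \<and> commg (conjg g g2) g3 = id \<and>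
       commg (conjg g g3) g1 = id \<and> commg (conjg g g3) g2 = id))
     \<and> (\<exists>i\<in>{1::nat,2,3}. \<exists>j\<in>{1::nat,2,3}.
          commg (conjg g ([g1,g2,g3] ! (i-1))) ([g1,g2,g3] ! (j-1)) = id)"
proof (intro ballI)
  fix g assume gG: "g \<in> G"
  have T: "simplicial_tree E" by (rule tree)
  have ga: "g \<in> tree_aut E" using gG G_sub by blast
  have bg: "bij g" using ga unfolding tree_aut_def by blast
  have b1: "bij g1" and b2: "bij g2" and b3: "bij g3" using g_in G_sub unfolding tree_aut_def by blast+
  have ig: "inj g" using bg bij_is_inj by blast
  define B1 where "B1 = g ` A1"
  define B2 where "B2 = g ` A2"
  define B3 where "B3 = g ` A3"
  have hB: "is_half_tree E B1" "is_half_tree E B2" "is_half_tree E B3"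
    unfolding B1_def B2_def B3_def using half_image[OF T ga] A_half by blast+
  have dB: "B1 \<inter> B2 = {}" "B1 \<inter> B3 = {}" "B2 \<inter> B3 = {}"
    unfolding B1_def B2_def B3_def using A_disj by (simp_all add: image_Int[OF ig, symmetric])
  have sB: "supported_in (conjg g g1) B1" "supported_in (conjg g g2) B2" "supported_in (conjg g g3) B3"
    unfolding B1_def B2_def B3_def using conj_supp[OF bg] supp by blast+
  have bc: "bij (conjg g g1)" "bij (conjg g g2)" "bij (conjg g g3)"
    using conj_bij[OF bg] b1 b2 b3 by blast+
  have P: "(commg (conjg g g1) g1 = id \<or> commg (conjg g g2) g2 = id \<or> commg (conjg g g3) g3 = id) \<or>
      (commg (conjg g g1) g2 = id \<and> commg (conjg g g1) g3 = id \<and>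
       commg (conjg g g2) g1 = id \<and> commg (conjg g g2) g3 = id \<and>
       commg (conjg g g3) g1 = id \<and> commg (conjg g g3) g2 = id)"
  proof (cases "B1 \<inter> A1 = {} \<or> B2 \<inter> A2 = {} \<or> B3 \<inter> A3 = {}")
    case True
    then show ?thesis
    proof (elim disjE)
      assume "B1 \<inter> A1 = {}" then show ?thesis using commute[OF bc(1) b1 sB(1) supp(1)] by simp
    next
      assume "B2 \<inter> A2 = {}" then show ?thesis using commute[OF bc(2) b2 sB(2) supp(2)] by simp
    next
      assume "B3 \<inter> A3 = {}" then show ?thesis using commute[OF bc(3) b3 sB(3) supp(3)] by simp
    qed
  next
    case False
    have t: "\<And>X Y. is_half_tree E X \<Longrightarrow> is_half_tree E Y \<Longrightarrow>
        X \<inter> Y = {} \<or> X \<subseteq> Y \<or> Y \<subseteq> X \<or> X \<union> Y = UNIV"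
      using trich_half[OF T] by blast
    have n: "B1 \<inter> A1 \<noteq> {}" "B2 \<inter> A2 \<noteq> {}" "B3 \<inter> A3 \<noteq> {}" using False by auto
    have Ad: "A1 \<inter> A2 = {}" "A1 \<inter> A3 = {}" "A2 \<inter> A3 = {}" "A2 \<inter> A1 = {}" "A3 \<inter> A1 = {}" "A3 \<inter> A2 = {}"
      using A_disj by (simp_all add: Int_commute)
    have Bd: "B1 \<inter> B2 = {}" "B1 \<inter> B3 = {}" "B2 \<inter> B3 = {}" "B2 \<inter> B1 = {}" "B3 \<inter> B1 = {}" "B3 \<inter> B2 = {}"
      using dB by (simp_all add: Int_commute)
    have t12: "B1 \<inter> A2 = {}" by (rule setM[OF t[OF hB(1) A_half(2)] n(1) Ad(1) Bd(1) n(2) Ad(6) n(3) Bd(2)])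
    have t13: "B1 \<inter> A3 = {}" by (rule setM[OF t[OF hB(1) A_half(3)] n(1) Ad(2) Bd(2) n(3) Ad(3) n(2) Bd(1)])
    have t21: "B2 \<inter> A1 = {}" by (rule setM[OF t[OF hB(2) A_half(1)] n(2) Ad(4) Bd(4) n(1) Ad(5) n(3) Bd(3)])
    have t23: "B2 \<inter> A3 = {}" by (rule setM[OF t[OF hB(2) A_half(3)] n(2) Ad(3) Bd(3) n(3) Ad(2) n(1) Bd(4)])
    have t31: "B3 \<inter> A1 = {}" by (rule setM[OF t[OF hB(3) A_half(1)] n(3) Ad(5) Bd(5) n(1) Ad(4) n(2) Bd(6)])
    have t32: "B3 \<inter> A2 = {}" by (rule setM[OF t[OF hB(3) A_half(2)] n(3) Ad(6) Bd(6) n(2) Ad(1) n(1) Bd(5)])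
    show ?thesis
      using commute[OF bc(1) b2 sB(1) supp(2) t12] commute[OF bc(1) b3 sB(1) supp(3) t13]
        commute[OF bc(2) b1 sB(2) supp(1) t21] commute[OF bc(2) b3 sB(2) supp(3) t23]
        commute[OF bc(3) b1 sB(3) supp(1) t31] commute[OF bc(3) b2 sB(3) supp(2) t32]
      by simp
  qed
  moreover have "\<exists>i\<in>{1::nat,2,3}. \<exists>j\<in>{1::nat,2,3}.
          commg (conjg g ([g1,g2,g3] ! (i-1))) ([g1,g2,g3] ! (j-1)) = id"
    using P
  proof (elim disjE conjE)
    assume "commg (conjg g g1) g1 = id" then show ?thesis using pick[of g g1 g2 g3 1 1] by simp
  next
    assume "commg (conjg g g2) g2 = id" then show ?thesis using pick[of g g1 g2 g3 2 2] by simp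
  next
    assume "commg (conjg g g3) g3 = id" then show ?thesis using pick[of g g1 g2 g3 3 3] by simp
  next
    assume "commg (conjg g g1) g2 = id" then show ?thesis using pick[of g g1 g2 g3 1 2] by simp
  qed
  ultimately show "((commg (conjg g g1) g1 = id \<or> commg (conjg g g2) g2 = id \<or> commg (conjg g g3) g3 = id) \<or>
      (commg (conjg g g1) g2 = id \<and> commg (conjg g g1) g3 = id \<and>
       commg (conjg g g2) g1 = id \<and> commg (conjg g g2) g3 = id \<and>
       commg (conjg g g3) g1 = id \<and> commg (conjg g g3) g2 = id))
     \<and> (\<exists>i\<in>{1::nat,2,3}. \<exists>j\<in>{1::nat,2,3}.
          commg (conjg g ([g1,g2,g3] ! (i-1))) ([g1,g2,g3] ! (j-1)) = id)" by blast
qed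

end
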